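(* Let $c_1\ge1$. Let $Q^0$ be the initial cube of the construction (so $Q^0\supset\operatorname{supp}\mu$), and suppose there exist cubes $Q_u,Q_d\in\mathcal D$ contained in $Q^0$ such that $c_1^{-1}\ell(Q^0)\le\operatorname{dist}(Q_u,Q_d)\le c_1\ell(Q^0)$ and $\mu(Q_u)\ge c_1^{-1}\mu(Q^0)$, $\mu(Q_d)\ge c_1^{-1}\mu(Q^0)$. Then $$\|\mathcal R\mu\|_{L^2(\mu)}^2\ge C\,\Theta(Q^0)^2\,\mu(Q^0),$$ where $C>0$ depends only on $c_1$, $s$, $d$ and $c_{sep}$.
   Context: $0<s<d$. $E\subset\mathbb R^d$ is a Cantor set built from a compact $Q^0$ by repeatedly choosing, inside each closed "cube" $Q$ of generation $k$, a finite nonempty family of closed children (the cubes of generation $k+1$), such that each child $Q'$ of $Q$ satisfies $\frac18\ell(Q)\le\ell(Q')\le\frac13\ell(Q)$, where $\ell(Q)=\operatorname{diam}(Q)$, and distinct children of $Q$ are at distance $\ge c_{sep}\ell(Q)$. $\mathcal D$ is the family of all such cubes. $\mu$ is a finite Borel measure supported on $E$ with $\mu(Q)>0$ for all $Q\in\mathcal D$. $\Theta(Q)=\mu(Q)/\ell(Q)^s$. $\mathcal R\mu(x)=\int\frac{x-y}{|x-y|^{s+1}}\,d\mu(y)$, with $\|\mathcal R\mu\|_{L^2(\mu)}$ understood via truncations $\mathcal R_\varepsilon\mu(x)=\int_{|x-y|>\varepsilon}\frac{x-y}{|x-y|^{s+1}}d\mu(y)$ uniformly in $\varepsilon>0$.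 *)

theory Defs
  imports "HOL-Analysis.Analysis"
begin

text \<open>The side length of a cube is its diameter.\<close>

definition cantor_construction ::
  "real \<Rightarrow> 'a::euclidean_space set \<Rightarrow> (nat \<Rightarrow> 'a set set) \<Rightarrow> (nat \<Rightarrow> 'a set \<Rightarrow> 'a set set) \<Rightarrow> bool" where
  "cantor_construction csep Q0 gen ch \<longleftrightarrow>
     compact Q0 \<and> gen 0 = {Q0} \<and>
     (\<forall>k. gen (Suc k) = (\<Union>Q\<in>gen k. ch k Q)) \<and>
     (\<forall>k. \<forall>Q\<in>gen k.
        finite (ch k Q) \<and> ch k Q \<noteq> {} \<and>
        (\<forall>Q'\<in>ch k Q. closed Q' \<and> Q' \<subseteq> Q \<and>
            diameter Q / 8 \<le> diameter Q' \<and> diameter Q' \<le> diameter Q / 3) \<and>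
        (\<forall>Q1\<in>ch k Q. \<forall>Q2\<in>ch k Q. Q1 \<noteq> Q2 \<longrightarrow> setdist Q1 Q2 \<ge> csep * diameter Q))"

definition cubes :: "(nat \<Rightarrow> 'a set set) \<Rightarrow> 'a set set" where
  "cubes gen = (\<Union>k. gen k)"

definition cantor_set :: "(nat \<Rightarrow> 'a set set) \<Rightarrow> 'a set" where
  "cantor_set gen = (\<Inter>k. \<Union>(gen k))"

definition Theta :: "real \<Rightarrow> 'a::euclidean_space measure \<Rightarrow> 'a set \<Rightarrow> real" where
  "Theta s \<mu> Q = measure \<mu> Q / diameter Q powr s"

definition riesz_trunc :: "real \<Rightarrow> 'a::euclidean_space measure \<Rightarrow> real \<Rightarrow> 'a \<Rightarrow> 'a" where
  "riesz_trunc s \<mu> \<epsilon> x =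
     (\<integral>y. (if \<epsilon> < dist x y then (norm (x - y) powr (-(s + 1))) *\<^sub>R (x - y) else 0) \<partial>\<mu>)"

definition riesz_L2sq :: "real \<Rightarrow> 'a::euclidean_space measure \<Rightarrow> ennreal" where
  "riesz_L2sq s \<mu> = (SUP \<epsilon>\<in>{0<..}. \<integral>\<^sup>+ x. ennreal ((norm (riesz_trunc s \<mu> \<epsilon> x))\<^sup>2) \<partial>\<mu>)"

end

theory Submission
  imports Defs
begin

lemma kernel_bound:
  fixes x y :: "'a::euclidean_space"
  assumes "0 < e" "0 < s"
  shows "norm (if e < dist x y then norm (x - y) powr (-(s+1)) *\<^sub>R (x - y) else 0) \<le> e powr (-s)"
proof (cases "e < dist x y")
  case True
  hence pos: "0 < norm (x - y)" using assms by (auto simp: dist_norm)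
  have "norm (norm (x - y) powr (-(s+1)) *\<^sub>R (x - y)) = norm (x - y) powr (-(s+1)) * norm (x-y) powr 1"
    using pos by simp
  also have "\<dots> = norm (x-y) powr (-(s+1) + 1)" by (simp only: powr_add)
  also have "\<dots> = norm (x-y) powr (-s)" by simp
  also have "\<dots> \<le> e powr (-s)" using True assms by (intro powr_mono2') (auto simp: dist_norm)
  finally show ?thesis using True by simp
qed (simp)

lemma amgm_aux:
  fixes n D l :: real assumes "0 < l"
  shows "n * D \<le> (l * n^2 + D^2 / l) / 2"
proof -
  have "0 \<le> (l*n - D)^2 / l" using assms by simp
  also have "(l*n - D)^2 / l = l * n^2 + D^2/l - 2*n*D" using assms
    by (simp add: power2_eq_square field_simps)
  finally show ?thesis by simp
qed

lemma powr_lower: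
  fixes D r c1 s :: real
  assumes D: "0 < D" and c1: "1 \<le> c1" and r1: "D / c1 \<le> r" and r2: "r \<le> D"
  shows "D / D powr s * c1 powr (-\<bar>1-s\<bar>) \<le> r powr (-(s+1)) * r^2"
proof -
  have r0: "0 < r" using D c1 r1 by (smt (verit) divide_pos_pos)
  have "r powr (-(s+1)) * r^2 = r powr (-(s+1)) * r powr 2" using r0 by (simp add: powr_realpow)
  also have "\<dots> = r powr (1-s)" by (simp add: powr_add[symmetric])
  finally have eq1: "r powr (-(s+1)) * r^2 = r powr (1-s)" .
  have eq2: "D / D powr s = D powr (1-s)" using D by (simp add: powr_diff)
  show ?thesis
  proof (cases "0 \<le> 1 - s")
    case True
    have "D powr (1-s) * c1 powr (-\<bar>1-s\<bar>) = (D / c1) powr (1-s)"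
    proof -
      have a: "(D/c1) powr (1-s) = D powr (1-s) / c1 powr (1-s)" using D c1 by (simp add: powr_divide)
      have b: "c1 powr (-\<bar>1-s\<bar>) = inverse (c1 powr (1-s))" using True powr_minus[of c1 "1-s"] by simp
      show ?thesis unfolding a b by (simp add: divide_inverse)
    qed
    also have "\<dots> \<le> r powr (1-s)" by (rule powr_mono2) (use True D c1 r1 in auto)
    finally show ?thesis using eq1 eq2 by simp
  next
    case False
    have "c1 powr (-\<bar>1-s\<bar>) \<le> 1" using c1 False powr_mono[of "1-s" 0 c1] by simp
    hence "D powr (1-s) * c1 powr (-\<bar>1-s\<bar>) \<le> D powr (1-s)" by (simp add: mult_left_le)
    also have "\<dots> \<le> r powr (1-s)" by (rule powr_mono2') (use False r0 r2 in auto)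
    finally show ?thesis using eq1 eq2 by simp
  qed
qed

lemma core:
  fixes \<mu> :: "'a::euclidean_space measure" and Q0 Qu Qd :: "'a set"
  assumes fm: "finite_measure \<mu>" and sets: "sets \<mu> = sets borel"
    and AEQ: "AE x in \<mu>. x \<in> Q0" and cQ0: "compact Q0"
    and cQu: "closed Qu" and cQd: "closed Qd" and sub: "Qu \<subseteq> Q0" "Qd \<subseteq> Q0"
    and c1: "c1 \<ge> 1" and s: "0 < s" and Dpos: "0 < diameter Q0"
    and sd: "diameter Q0 / c1 \<le> setdist Qu Qd"
    and mu: "measure \<mu> Qu \<ge> measure \<mu> Q0 / c1" and md: "measure \<mu> Qd \<ge> measure \<mu> Q0 / c1"
    and Mpos: "0 < measure \<mu> Q0"
  defines "e \<equiv> diameter Q0 / (2 * c1)"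
  defines "R \<equiv> (\<lambda>x y. if e < dist x y then norm (x - y) powr (-(s+1)) *\<^sub>R (x - y) else 0)"
  shows "(c1 powr (-2*\<bar>1-s\<bar>) / (4 * c1^4)) * (measure \<mu> Q0 / diameter Q0 powr s)^2 * measure \<mu> Q0
     \<le> (\<integral>x. (norm (\<integral>y. R x y \<partial>\<mu>))^2 \<partial>\<mu>)"
proof -
  interpret finite_measure \<mu> by (rule fm)
  interpret P: pair_sigma_finite \<mu> \<mu> by unfold_locales
  interpret PF: finite_measure "\<mu> \<Otimes>\<^sub>M \<mu>" by (rule finite_measure_pair_measure[OF fm fm])
  define D where "D = diameter Q0"
  define M where "M = measure \<mu> Q0"
  have D0: "0 < D" using Dpos D_def by simp
  have e0: "0 < e" using D0 c1 by (simp add: e_def D_def)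
  have spc: "space \<mu> = UNIV" using sets_eq_imp_space_eq[OF sets] by simp
  have bQ0: "bounded Q0" using cQ0 compact_imp_bounded by blast
  have Q0m: "Q0 \<in> sets \<mu>" using sets cQ0 by (simp add: borel_compact)
  have Qum: "Qu \<in> sets \<mu>" using sets cQu by auto
  have Qdm: "Qd \<in> sets \<mu>" using sets cQd by auto
  have msp: "measure \<mu> (space \<mu>) = M"
  proof -
    have "emeasure \<mu> Q0 = emeasure \<mu> (space \<mu>)"
      by (rule emeasure_eq_AE) (use AEQ Q0m in auto)
    thus ?thesis unfolding M_def measure_def by simp
  qed
  define B where "B = e powr (-s)"
  have B0: "0 \<le> B" unfolding B_def by simp
  have nR: "norm (R x y) \<le> B" for x y unfolding R_def B_def by (rule kernel_bound[OF e0 s])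
  have sP: "sets (\<mu> \<Otimes>\<^sub>M \<mu>) = sets (borel \<Otimes>\<^sub>M borel)" by (rule sets_pair_measure_cong[OF sets sets])
  have Rm0: "(\<lambda>p. R (fst p) (snd p)) \<in> borel_measurable (borel \<Otimes>\<^sub>M borel)"
    unfolding R_def by measurable
  have Rm: "(\<lambda>p. R (fst p) (snd p)) \<in> borel_measurable (\<mu> \<Otimes>\<^sub>M \<mu>)"
    using Rm0 measurable_cong_sets[OF sP refl] by blast
  have Rxm: "R x \<in> borel_measurable \<mu>" for x
    using measurable_Pair2[OF Rm, of x] by (simp add: spc)
  have intR: "integrable \<mu> (R x)" for x
    by (rule integrable_const_bound[where B=B]) (use nR Rxm in auto)
  define f where "f x = (\<integral>y. R x y \<partial>\<mu>)" for x
  have fm': "f \<in> borel_measurable \<mu>"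
    unfolding f_def
    by (rule sigma_finite_measure.borel_measurable_lebesgue_integral[where f="\<lambda>x y. R x y" and N=\<mu>])
       (unfold_locales, use Rm in \<open>simp add: case_prod_beta'\<close>)
  have nf: "norm (f x) \<le> B * M" for x
  proof -
    have "norm (f x) \<le> (\<integral>y. norm (R x y) \<partial>\<mu>)" unfolding f_def by (rule integral_norm_bound)
    also have "\<dots> \<le> (\<integral>y. B \<partial>\<mu>)" by (rule integral_mono) (use intR nR in auto)
    also have "\<dots> = B * M" using msp by simp
    finally show ?thesis .
  qed

  obtain a where aQ: "a \<in> Q0" using Dpos by (metis diameter_empty equals0I less_irrefl)
  define V where "V x = indicator Q0 x *\<^sub>R (x - a)" for x
  have nV: "norm (V x) \<le> D" for x
  proof (cases "x \<in> Q0")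
    case True
    thus ?thesis using diameter_bounded_bound[OF bQ0 True aQ] unfolding V_def D_def by (simp add: dist_norm)
  qed (use D0 V_def in simp)
  define G where "G p = indicator Q0 (snd p) * (R (fst p) (snd p) \<bullet> V (fst p))" for p
  have Q0b[measurable]: "Q0 \<in> sets borel" using cQ0 by (simp add: borel_compact)
  note Rm0[measurable]
  have Gm0: "G \<in> borel_measurable (borel \<Otimes>\<^sub>M borel)"
    unfolding G_def V_def by measurable
  have Gm: "G \<in> borel_measurable (\<mu> \<Otimes>\<^sub>M \<mu>)"
    using Gm0 measurable_cong_sets[OF sP refl] by blast
  have nG: "norm (G p) \<le> B * D" for p
  proof -
    have "norm (G p) \<le> \<bar>R (fst p) (snd p) \<bullet> V (fst p)\<bar>" unfolding G_def by (simp add: indicator_def)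
    also have "\<dots> \<le> norm (R (fst p) (snd p)) * norm (V (fst p))" by (rule Cauchy_Schwarz_ineq2)
    also have "\<dots> \<le> B * D" by (rule mult_mono) (use nR nV B0 in auto)
    finally show ?thesis .
  qed
  have intG: "integrable (\<mu> \<Otimes>\<^sub>M \<mu>) G"
    by (rule PF.integrable_const_bound[where B="B*D"]) (use nG Gm in auto)
  have Gxm: "(\<lambda>y. G (x,y)) \<in> borel_measurable \<mu>" for x
    using measurable_Pair2[OF Gm, of x] by (simp add: spc)
  have step1: "f x \<bullet> V x = (\<integral>y. G (x, y) \<partial>\<mu>)" for x
  proof -
    have "f x \<bullet> V x = (\<integral>y. R x y \<bullet> V x \<partial>\<mu>)" unfolding f_def
      by (rule integral_inner_left[symmetric]) (use intR in auto)
    also have "\<dots> = (\<integral>y. G (x, y) \<partial>\<mu>)"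
      by (rule integral_cong_AE) (use AEQ Rxm Gxm[of x] in \<open>auto simp: G_def\<close>)
    finally show ?thesis .
  qed
  define I where "I = (\<integral>x. f x \<bullet> V x \<partial>\<mu>)"
  have I1: "I = integral\<^sup>L (\<mu> \<Otimes>\<^sub>M \<mu>) G"
    unfolding I_def step1 by (rule P.integral_fst'[OF intG])
  have I2: "I = (\<integral>p. G (snd p, fst p) \<partial>(\<mu> \<Otimes>\<^sub>M \<mu>))"
    unfolding I1 using P.integral_product_swap[OF Gm] by (simp add: case_prod_beta')

  define H where "H p = G p + G (snd p, fst p)" for p
  have Rdot: "R x y \<bullet> (x - y) = (if e < dist x y then norm (x-y) powr (-(s+1)) * (norm (x-y))^2 else 0)" for x y
    by (simp add: R_def power2_norm_eq_inner)
  have Rsym: "R y x = - R x y" for x y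
    by (simp add: R_def dist_commute norm_minus_commute scaleR_diff_right)
  have Hform: "H (x,y) = indicator Q0 x * indicator Q0 y * (R x y \<bullet> (x - y))" for x y
  proof -
    have "H (x,y) = indicator Q0 y * indicator Q0 x * (R x y \<bullet> (x - a)) + indicator Q0 x * indicator Q0 y * (R y x \<bullet> (y - a))"
      by (simp add: H_def G_def V_def)
    also have "\<dots> = indicator Q0 x * indicator Q0 y * (R x y \<bullet> (x - a) - R x y \<bullet> (y - a))"
      unfolding Rsym[of x y] inner_minus_left by (simp add: right_diff_distrib mult.commute)
    also have "\<dots> = indicator Q0 x * indicator Q0 y * (R x y \<bullet> (x - y))"
      by (simp add: inner_diff_right)
    finally show ?thesis .
  qed
  have H0: "0 \<le> H p" for p
    using Hform[of "fst p" "snd p"] Rdot[of "fst p" "snd p"] by (simp add: indicator_def)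
  define m where "m = D / D powr s * c1 powr (-\<bar>1-s\<bar>)"
  have m0: "0 \<le> m" unfolding m_def using D0 by simp
  have Hlow: "m * indicator (Qu \<times> Qd) p \<le> H p" for p
  proof (cases "p \<in> Qu \<times> Qd")
    case True
    obtain x y where p: "p = (x,y)" "x \<in> Qu" "y \<in> Qd" using True by auto
    have xy: "x \<in> Q0" "y \<in> Q0" using p sub by auto
    have dl: "D / c1 \<le> dist x y" using sd setdist_le_dist[OF p(2) p(3)] D_def by simp
    have du: "dist x y \<le> D" using diameter_bounded_bound[OF bQ0 xy] D_def by simp
    have "e < D / c1" unfolding e_def D_def[symmetric] using D0 c1 by (simp add: field_simps)
    hence ed: "e < dist x y" using dl by simp
    have "m \<le> norm (x-y) powr (-(s+1)) * (norm (x-y))^2"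
      unfolding m_def by (rule powr_lower) (use D0 c1 dl du in \<open>auto simp: dist_norm\<close>)
    thus ?thesis using p xy ed Hform[of x y] Rdot[of x y] by (simp add: indicator_def)
  qed (simp add: H0)
  have intGs: "integrable (\<mu> \<Otimes>\<^sub>M \<mu>) (\<lambda>p. G (snd p, fst p))"
    using P.integrable_product_swap[OF intG] by (simp add: case_prod_beta')
  have intH: "integrable (\<mu> \<Otimes>\<^sub>M \<mu>) H" unfolding H_def using intG intGs by simp
  have I2H: "2 * I = integral\<^sup>L (\<mu> \<Otimes>\<^sub>M \<mu>) H"
  proof -
    have "integral\<^sup>L (\<mu> \<Otimes>\<^sub>M \<mu>) H = integral\<^sup>L (\<mu> \<Otimes>\<^sub>M \<mu>) G + (\<integral>p. G (snd p, fst p) \<partial>(\<mu> \<Otimes>\<^sub>M \<mu>))"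
      unfolding H_def by (rule Bochner_Integration.integral_add[OF intG intGs])
    thus ?thesis using I1 I2 by simp
  qed
  have QQm: "Qu \<times> Qd \<in> sets (\<mu> \<Otimes>\<^sub>M \<mu>)" using Qum Qdm by simp
  have mQQ: "measure (\<mu> \<Otimes>\<^sub>M \<mu>) (Qu \<times> Qd) = measure \<mu> Qu * measure \<mu> Qd"
    using emeasure_pair_measure_Times[OF Qum Qdm]
    by (simp add: measure_def enn2real_mult)
  have intInd: "integrable (\<mu> \<Otimes>\<^sub>M \<mu>) (indicator (Qu \<times> Qd) :: _ \<Rightarrow> real)"
    by (rule integrable_real_indicator[OF QQm]) (simp add: PF.emeasure_real less_top[symmetric])
  have sp: "Qu \<times> Qd \<inter> space (\<mu> \<Otimes>\<^sub>M \<mu>) = Qu \<times> Qd"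
    using sets.sets_into_space[OF QQm] by blast
  have low: "m * (measure \<mu> Qu * measure \<mu> Qd) \<le> 2 * I"
  proof -
    have A: "(\<integral>p. m * indicator (Qu \<times> Qd) p \<partial>(\<mu> \<Otimes>\<^sub>M \<mu>)) \<le> integral\<^sup>L (\<mu> \<Otimes>\<^sub>M \<mu>) H"
      by (rule integral_mono) (use intInd intH Hlow in auto)
    have B: "(\<integral>p. m * indicator (Qu \<times> Qd) p \<partial>(\<mu> \<Otimes>\<^sub>M \<mu>)) = m * measure (\<mu> \<Otimes>\<^sub>M \<mu>) (Qu \<times> Qd \<inter> space (\<mu> \<Otimes>\<^sub>M \<mu>))"
      by simp
    have C: "measure (\<mu> \<Otimes>\<^sub>M \<mu>) (Qu \<times> Qd \<inter> space (\<mu> \<Otimes>\<^sub>M \<mu>)) = measure \<mu> Qu * measure \<mu> Qd"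
      by (simp only: sp mQQ)
    show ?thesis using A B C I2H by simp
  qed

  define J where "J = (\<integral>x. (norm (f x))^2 \<partial>\<mu>)"
  have sB: "sets \<mu> = sets borel" by (rule sets)
  have Vm: "V \<in> borel_measurable \<mu>"
  proof -
    have "V \<in> borel_measurable borel" unfolding V_def by measurable
    thus ?thesis using measurable_cong_sets[OF sB refl] by blast
  qed
  have intfV: "integrable \<mu> (\<lambda>x. f x \<bullet> V x)"
  proof (rule integrable_const_bound[where B="B*M*D"])
    show "AE x in \<mu>. norm (f x \<bullet> V x) \<le> B * M * D"
    proof (intro AE_I2)
      fix x
      have "norm (f x \<bullet> V x) \<le> norm (f x) * norm (V x)" using Cauchy_Schwarz_ineq2 by simp
      also have "\<dots> \<le> B * M * D" by (rule mult_mono) (use nf nV B0 Mpos M_def in auto)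
      finally show "norm (f x \<bullet> V x) \<le> B * M * D" .
    qed
  qed (use fm' Vm in measurable)
  have intf2: "integrable \<mu> (\<lambda>x. (norm (f x))^2)"
  proof (rule integrable_const_bound[where B="(B*M)^2"])
    show "AE x in \<mu>. norm ((norm (f x))^2) \<le> (B*M)^2"
      by (intro AE_I2) (simp add: power_mono nf)
  qed (use fm' in measurable)
  have Jup: "I \<le> (l * J + D^2 / l * M) / 2" if l0: "0 < l" for l
  proof -
    have "I \<le> (\<integral>x. (l * (norm (f x))^2 + D^2 / l) / 2 \<partial>\<mu>)"
      unfolding I_def
    proof (rule integral_mono)
      show "integrable \<mu> (\<lambda>x. (l * (norm (f x))^2 + D^2 / l) / 2)" using intf2 by simp
      fix x
      have "f x \<bullet> V x \<le> norm (f x) * norm (V x)" by (rule norm_cauchy_schwarz)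
      also have "\<dots> \<le> norm (f x) * D" by (rule mult_left_mono) (use nV in auto)
      also have "\<dots> \<le> (l * (norm (f x))^2 + D^2 / l) / 2" by (rule amgm_aux[OF l0])
      finally show "f x \<bullet> V x \<le> (l * (norm (f x))^2 + D^2 / l) / 2" .
    qed (rule intfV)
    also have "\<dots> = (l * J + D^2 / l * M) / 2"
      using intf2 msp by (simp add: J_def)
    finally show ?thesis .
  qed
  have mp: "0 < m" unfolding m_def using D0 c1 by simp
  have Mp: "0 < M" using Mpos M_def by simp
  define P where "P = m * M^2 / (2 * c1^2)"
  have Pp: "0 < P" unfolding P_def using mp Mp c1 by simp
  have PI: "P \<le> I"
  proof -
    have "(M/c1)^2 \<le> measure \<mu> Qu * measure \<mu> Qd"
    proof -
      have "(M/c1)^2 = (M/c1) * (M/c1)" by (simp add: power2_eq_square)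
      also have "\<dots> \<le> measure \<mu> Qu * measure \<mu> Qd"
        by (rule mult_mono) (use mu md M_def Mp c1 in auto)
      finally show ?thesis .
    qed
    hence "m * (M/c1)^2 \<le> 2 * I" using low mp by (smt (verit) mult_left_mono)
    hence z1: "m * M^2 / c1^2 \<le> 2 * I" by (simp add: power_divide)
    define z where "z = m * M^2 / c1^2"
    have z2: "P = z / 2" unfolding P_def z_def by simp
    show ?thesis using z1 z2 unfolding z_def[symmetric] by linarith
  qed
  define l where "l = D^2 * M / P"
  have l0: "0 < l" unfolding l_def using D0 Mp Pp by simp
  have lP: "D^2 / l * M = P" unfolding l_def using D0 Mp Pp by (simp add: field_simps)
  have "P \<le> l * J" proof -
    have a1: "I \<le> (l * J + P) / 2" using Jup[OF l0] lP by simp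
    show ?thesis using a1 PI by argo
  qed
  hence Jl: "P / l \<le> J" using l0 by (simp add: field_simps)
  have "(c1 powr (-2*\<bar>1-s\<bar>) / (4 * c1^4)) * (M / D powr s)^2 * M = P / l"
  proof -
    have cc: "(c1 powr (-\<bar>1-s\<bar>))^2 = c1 powr (-2*\<bar>1-s\<bar>)"
      by (simp add: power2_eq_square powr_add[symmetric])
    show ?thesis unfolding l_def P_def m_def using D0 Mp c1 cc[symmetric]
      by (simp add: field_simps power2_eq_square eval_nat_numeral)
  qed
  thus ?thesis using Jl unfolding J_def f_def M_def D_def by simp

qed


lemma cc_compact:
  assumes "cantor_construction csep Q0 gen ch"
  shows "\<forall>Q\<in>gen k. compact Q"
proof (induction k)
  case 0 thus ?case using assms by (simp add: cantor_construction_def)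
next
  case (Suc k)
  have "compact Q'" if "Q \<in> gen k" "Q' \<in> ch k Q" for Q Q'
  proof -
    have "closed Q'" "Q' \<subseteq> Q" using assms that unfolding cantor_construction_def by blast+
    thus ?thesis using Suc that compact_Int_closed[of Q Q'] by (simp add: Int_absorb1)
  qed
  moreover have "gen (Suc k) = (\<Union>Q\<in>gen k. ch k Q)" using assms by (simp add: cantor_construction_def)
  ultimately show ?case by blast
qed

lemma cc_finite:
  assumes "cantor_construction csep Q0 gen ch"
  shows "finite (gen k)"
proof (induction k)
  case 0 thus ?case using assms by (simp add: cantor_construction_def)
next
  case (Suc k)
  have "gen (Suc k) = (\<Union>Q\<in>gen k. ch k Q)" using assms by (simp add: cantor_construction_def)
  moreover have "\<forall>Q\<in>gen k. finite (ch k Q)" using assms by (simp add: cantor_construction_def)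
  ultimately show ?case using Suc by simp
qed

theorem lemma8p3:
  fixes s c1 csep :: real
  assumes "0 < s" "s < real DIM('a::euclidean_space)" "c1 \<ge> 1" "0 < csep"
  shows "\<exists>C>0. \<forall>(Q0::'a set) gen ch (\<mu>::'a measure) Qu Qd.
    cantor_construction csep Q0 gen ch \<and>
    finite_measure \<mu> \<and> sets \<mu> = sets borel \<and>
    emeasure \<mu> (UNIV - cantor_set gen) = 0 \<and>
    (\<forall>Q\<in>cubes gen. 0 < measure \<mu> Q) \<and>
    Qu \<in> cubes gen \<and> Qd \<in> cubes gen \<and> Qu \<subseteq> Q0 \<and> Qd \<subseteq> Q0 \<and>
    diameter Q0 / c1 \<le> setdist Qu Qd \<and> setdist Qu Qd \<le> c1 * diameter Q0 \<and>
    measure \<mu> Qu \<ge> measure \<mu> Q0 / c1 \<and> measure \<mu> Qd \<ge> measure \<mu> Q0 / c1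
    \<longrightarrow> ennreal (C * (Theta s \<mu> Q0)\<^sup>2 * measure \<mu> Q0) \<le> riesz_L2sq s \<mu>"
proof (intro exI[of _ "c1 powr (-2*\<bar>1-s\<bar>) / (4 * c1^4)"] conjI allI impI)
  show "0 < c1 powr (-2*\<bar>1-s\<bar>) / (4 * c1^4)" using assms by simp
  fix Q0 :: "'a set" and gen ch and \<mu> :: "'a measure" and Qu Qd
  assume H: "cantor_construction csep Q0 gen ch \<and>
    finite_measure \<mu> \<and> sets \<mu> = sets borel \<and>
    emeasure \<mu> (UNIV - cantor_set gen) = 0 \<and>
    (\<forall>Q\<in>cubes gen. 0 < measure \<mu> Q) \<and>
    Qu \<in> cubes gen \<and> Qd \<in> cubes gen \<and> Qu \<subseteq> Q0 \<and> Qd \<subseteq> Q0 \<and>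
    diameter Q0 / c1 \<le> setdist Qu Qd \<and> setdist Qu Qd \<le> c1 * diameter Q0 \<and>
    measure \<mu> Qu \<ge> measure \<mu> Q0 / c1 \<and> measure \<mu> Qd \<ge> measure \<mu> Q0 / c1"
  define C where "C = c1 powr (-2*\<bar>1-s\<bar>) / (4 * c1^4)"
  have cc: "cantor_construction csep Q0 gen ch" and fm: "finite_measure \<mu>"
    and sets: "sets \<mu> = sets borel" and null: "emeasure \<mu> (UNIV - cantor_set gen) = 0"
    and pos: "\<forall>Q\<in>cubes gen. 0 < measure \<mu> Q" and Qu: "Qu \<in> cubes gen" and Qd: "Qd \<in> cubes gen"
    and sub: "Qu \<subseteq> Q0" "Qd \<subseteq> Q0" and sd: "diameter Q0 / c1 \<le> setdist Qu Qd"
    and mu: "measure \<mu> Qu \<ge> measure \<mu> Q0 / c1" and md: "measure \<mu> Qd \<ge> measure \<mu> Q0 / c1"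
    using H by auto
  have g0: "gen 0 = {Q0}" and cQ0: "compact Q0" using cc by (auto simp: cantor_construction_def)
  have comp: "compact Q" if "Q \<in> cubes gen" for Q
    using that cc_compact[OF cc] unfolding cubes_def by blast
  have Mpos: "0 < measure \<mu> Q0" using pos g0 unfolding cubes_def by blast
  have closedK: "closed (cantor_set gen)"
    unfolding cantor_set_def
  proof (intro closed_INT ballI closed_Union)
    fix k show "finite (gen k)" by (rule cc_finite[OF cc])
    show "\<And>T. T \<in> gen k \<Longrightarrow> closed T" using cc_compact[OF cc, of k] compact_imp_closed by blast
  qed
  have Ksub: "cantor_set gen \<subseteq> Q0" unfolding cantor_set_def using g0 by blast
  have AEQ: "AE x in \<mu>. x \<in> Q0"
  proof (rule AE_I[where N="UNIV - cantor_set gen"])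
    show "{x \<in> space \<mu>. x \<notin> Q0} \<subseteq> UNIV - cantor_set gen" using Ksub by blast
    show "emeasure \<mu> (UNIV - cantor_set gen) = 0" by (rule null)
    show "UNIV - cantor_set gen \<in> sets \<mu>" using sets closedK by auto
  qed
  show "ennreal (C * (Theta s \<mu> Q0)\<^sup>2 * measure \<mu> Q0) \<le> riesz_L2sq s \<mu>"
  proof (cases "diameter Q0 = 0")
    case True
    thus ?thesis using assms by (simp add: Theta_def)
  next
    case False
    have Dpos: "0 < diameter Q0" using False diameter_ge_0[OF compact_imp_bounded[OF cQ0]] by simp
    define e where "e = diameter Q0 / (2 * c1)"
    define R where "R = (\<lambda>x y. if e < dist x y then norm (x - y) powr (-(s+1)) *\<^sub>R (x - y) else (0::'a))"
    have e0: "0 < e" using Dpos assms by (simp add: e_def)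
    have key: "C * (measure \<mu> Q0 / diameter Q0 powr s)^2 * measure \<mu> Q0
       \<le> (\<integral>x. (norm (\<integral>y. R x y \<partial>\<mu>))^2 \<partial>\<mu>)"
      unfolding C_def R_def e_def
      by (rule core[OF fm sets AEQ cQ0 compact_imp_closed[OF comp[OF Qu]] compact_imp_closed[OF comp[OF Qd]]
          sub \<open>c1 \<ge> 1\<close> \<open>0 < s\<close> Dpos sd mu md Mpos])
    have rt: "riesz_trunc s \<mu> e x = (\<integral>y. R x y \<partial>\<mu>)" for x
      unfolding riesz_trunc_def R_def by simp
    define g where "g x = (norm (\<integral>y. R x y \<partial>\<mu>))^2" for x
    have "ennreal (integral\<^sup>L \<mu> g) \<le> (\<integral>\<^sup>+ x. ennreal (g x) \<partial>\<mu>)"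
    proof (cases "integrable \<mu> g")
      case True
      thus ?thesis by (subst nn_integral_eq_integral) (auto simp: g_def)
    next
      case False
      thus ?thesis by (simp add: not_integrable_integral_eq)
    qed
    also have "\<dots> = (\<integral>\<^sup>+ x. ennreal ((norm (riesz_trunc s \<mu> e x))\<^sup>2) \<partial>\<mu>)"
      by (simp add: rt g_def)
    also have "\<dots> \<le> riesz_L2sq s \<mu>"
      unfolding riesz_L2sq_def by (rule SUP_upper) (use e0 in simp)
    finally have fin: "ennreal (integral\<^sup>L \<mu> g) \<le> riesz_L2sq s \<mu>" .
    have "ennreal (C * (Theta s \<mu> Q0)\<^sup>2 * measure \<mu> Q0) \<le> ennreal (integral\<^sup>L \<mu> g)"
      using key unfolding Theta_def g_def by (rule ennreal_leI)
    thus ?thesis using fin by (rule order_trans)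
  qed
qed

end
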